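(* Let $G$ be a graphical regular representation of a finitely generated group. Then every periodic vertex-coloring, edge-coloring or orientation of $G$ is strongly periodic.
   Context: For a group $\Gamma$ with finite generating set $S$ not containing the identity, $\mathrm{Cay}(\Gamma,S)$ has vertex set $\Gamma$, with $g,h$ adjacent iff $hg^{-1}\in S\cup S^{-1}$; it is a graphical regular representation of $\Gamma$ if its automorphism group consists exactly of the right multiplications by elements of $\Gamma$. A coloring or orientation is periodic if the subgroup of automorphisms preserving it has finitely many orbits on $V(G)$, and strongly periodic if this subgroup has finite index in $\mathrm{Aut}(G)$. *)

theory Defs
  imports "HOL-Algebra.Algebra"
begin

definition cayley_adj :: "('a, 'b) monoid_scheme \<Rightarrow> 'a set \<Rightarrow> 'a \<Rightarrow> 'a \<Rightarrow> bool" where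
  "cayley_adj G S g h \<longleftrightarrow> h \<otimes>\<^bsub>G\<^esub> inv\<^bsub>G\<^esub> g \<in> S \<union> (\<lambda>s. inv\<^bsub>G\<^esub> s) ` S"

definition graph_aut :: "'a set \<Rightarrow> ('a \<Rightarrow> 'a \<Rightarrow> bool) \<Rightarrow> ('a \<Rightarrow> 'a) set" where
  "graph_aut V E = {f \<in> Bij V. \<forall>u\<in>V. \<forall>v\<in>V. E u v \<longleftrightarrow> E (f u) (f v)}"

definition aut_group :: "'a set \<Rightarrow> ('a \<Rightarrow> 'a \<Rightarrow> bool) \<Rightarrow> ('a \<Rightarrow> 'a) monoid" where
  "aut_group V E = (BijGroup V)\<lparr>carrier := graph_aut V E\<rparr>"

definition is_GRR :: "('a, 'b) monoid_scheme \<Rightarrow> 'a set \<Rightarrow> bool" where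
  "is_GRR G S \<longleftrightarrow>
     graph_aut (carrier G) (cayley_adj G S) =
       {restrict (\<lambda>x. x \<otimes>\<^bsub>G\<^esub> g) (carrier G) | g. g \<in> carrier G}"

definition vcol_stab :: "'a set \<Rightarrow> ('a \<Rightarrow> 'a \<Rightarrow> bool) \<Rightarrow> ('a \<Rightarrow> 'c) \<Rightarrow> ('a \<Rightarrow> 'a) set" where
  "vcol_stab V E c = {f \<in> graph_aut V E. \<forall>v\<in>V. c (f v) = c v}"

definition ecol_stab :: "'a set \<Rightarrow> ('a \<Rightarrow> 'a \<Rightarrow> bool) \<Rightarrow> ('a set \<Rightarrow> 'c) \<Rightarrow> ('a \<Rightarrow> 'a) set" where
  "ecol_stab V E c = {f \<in> graph_aut V E. \<forall>u\<in>V. \<forall>v\<in>V. E u v \<longrightarrow> c {f u, f v} = c {u, v}}"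

definition is_orientation :: "'a set \<Rightarrow> ('a \<Rightarrow> 'a \<Rightarrow> bool) \<Rightarrow> ('a \<times> 'a) set \<Rightarrow> bool" where
  "is_orientation V E Or \<longleftrightarrow> Or \<subseteq> V \<times> V \<and> (\<forall>(u, v)\<in>Or. E u v) \<and>
     (\<forall>u\<in>V. \<forall>v\<in>V. E u v \<longrightarrow> ((u, v) \<in> Or \<longleftrightarrow> (v, u) \<notin> Or))"

definition orient_stab :: "'a set \<Rightarrow> ('a \<Rightarrow> 'a \<Rightarrow> bool) \<Rightarrow> ('a \<times> 'a) set \<Rightarrow> ('a \<Rightarrow> 'a) set" where
  "orient_stab V E Or = {f \<in> graph_aut V E. \<forall>(u, v)\<in>Or. (f u, f v) \<in> Or}"

definition periodic :: "'a set \<Rightarrow> ('a \<Rightarrow> 'a) set \<Rightarrow> bool" where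
  "periodic V H \<longleftrightarrow> finite ((\<lambda>v. (\<lambda>f. f v) ` H) ` V)"

definition strongly_periodic :: "'a set \<Rightarrow> ('a \<Rightarrow> 'a \<Rightarrow> bool) \<Rightarrow> ('a \<Rightarrow> 'a) set \<Rightarrow> bool" where
  "strongly_periodic V E H \<longleftrightarrow> finite (rcosets\<^bsub>aut_group V E\<^esub> H)"

end

theory Submission
  imports Defs
begin

lemma key:
  assumes grp: "group G" and grr: "is_GRR G S"
    and HA: "H \<subseteq> graph_aut (carrier G) (cayley_adj G S)"
    and per: "periodic (carrier G) H"
  shows "strongly_periodic (carrier G) (cayley_adj G S) H"
proof -
  interpret group G by (rule grp)
  define V where "V = carrier G"
  define E where "E = cayley_adj G S"
  define A where "A = graph_aut V E"
  define ev where "ev = (\<lambda>C::('a\<Rightarrow>'a) set. (\<lambda>f. f \<one>\<^bsub>G\<^esub>) ` C)"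
  have Aeq: "A = {restrict (\<lambda>x. x \<otimes>\<^bsub>G\<^esub> g) V | g. g \<in> V}"
    using grr unfolding is_GRR_def A_def V_def E_def by simp
  have HA': "H \<subseteq> A" using HA unfolding A_def V_def E_def .
  have evinj: "f = f'" if fa: "f \<in> A" "f' \<in> A" "f \<one>\<^bsub>G\<^esub> = f' \<one>\<^bsub>G\<^esub>" for f f'
  proof -
    obtain g where g: "g \<in> V" "f = restrict (\<lambda>x. x \<otimes>\<^bsub>G\<^esub> g) V" using fa(1) Aeq by blast
    obtain g' where g': "g' \<in> V" "f' = restrict (\<lambda>x. x \<otimes>\<^bsub>G\<^esub> g') V" using fa(2) Aeq by blast
    have "g = g'" using fa(3) g g' by (simp add: V_def)
    then show ?thesis using g g' by simp
  qed
  have AB: "A \<subseteq> Bij V" unfolding A_def graph_aut_def by auto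
  have mult_eq: "monoid.mult (aut_group V E) = monoid.mult (BijGroup V)" unfolding aut_group_def by simp
  have carr: "carrier (aut_group V E) = A" unfolding aut_group_def A_def by simp
  have elem: "x \<in> A \<and> x \<one>\<^bsub>G\<^esub> = h (a \<one>\<^bsub>G\<^esub>)" if el: "a \<in> A" "h \<in> H" "x = monoid.mult (aut_group V E) h a" for x h a
  proof -
    have hB: "h \<in> Bij V" "a \<in> Bij V" using el HA' AB by auto
    have x: "x = compose V h a" using el(3) hB unfolding mult_eq BijGroup_def by simp
    obtain g where g: "g \<in> V" "a = restrict (\<lambda>x. x \<otimes>\<^bsub>G\<^esub> g) V" using el(1) Aeq by blast
    obtain k where k: "k \<in> V" "h = restrict (\<lambda>x. x \<otimes>\<^bsub>G\<^esub> k) V" using el(2) HA' Aeq by blast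
    have "x = restrict (\<lambda>x. x \<otimes>\<^bsub>G\<^esub> (g \<otimes>\<^bsub>G\<^esub> k)) V"
      using g k unfolding x compose_def by (auto simp: V_def m_assoc fun_eq_iff)
    then have "x \<in> A" using g k by (auto simp: Aeq V_def)
    moreover have "x \<one>\<^bsub>G\<^esub> = h (a \<one>\<^bsub>G\<^esub>)" unfolding x compose_def by (simp add: V_def)
    ultimately show ?thesis by simp
  qed
  have csub: "H #>\<^bsub>aut_group V E\<^esub> a \<subseteq> A" if "a \<in> A" for a
    using elem[OF that] unfolding r_coset_def by blast
  have cev: "ev (H #>\<^bsub>aut_group V E\<^esub> a) = (\<lambda>f. f (a \<one>\<^bsub>G\<^esub>)) ` H" if "a \<in> A" for a
    using elem[OF that] unfolding r_coset_def ev_def by (auto simp: image_iff)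
  have aV: "a \<one>\<^bsub>G\<^esub> \<in> V" if "a \<in> A" for a
    using that AB unfolding Bij_def bij_betw_def V_def by blast
  have sub: "ev ` (rcosets\<^bsub>aut_group V E\<^esub> H) \<subseteq> (\<lambda>v. (\<lambda>f. f v) ` H) ` V"
    unfolding RCOSETS_def carr using cev aV by auto
  have inj: "inj_on ev (rcosets\<^bsub>aut_group V E\<^esub> H)"
  proof (rule inj_onI)
    fix C1 C2 assume c1: "C1 \<in> rcosets\<^bsub>aut_group V E\<^esub> H" and c2: "C2 \<in> rcosets\<^bsub>aut_group V E\<^esub> H"
      and e: "ev C1 = ev C2"
    have s1: "C1 \<subseteq> A" using c1 csub unfolding RCOSETS_def carr by auto
    have s2: "C2 \<subseteq> A" using c2 csub unfolding RCOSETS_def carr by auto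
    show "C1 = C2"
    proof
      show "C1 \<subseteq> C2"
      proof
        fix x assume "x \<in> C1"
        then have "x \<one>\<^bsub>G\<^esub> \<in> ev C2" using e unfolding ev_def by (metis image_eqI)
        then obtain y where "y \<in> C2" "y \<one>\<^bsub>G\<^esub> = x \<one>\<^bsub>G\<^esub>" unfolding ev_def by auto
        then show "x \<in> C2" using evinj s1 s2 \<open>x \<in> C1\<close> by (metis subsetD)
      qed
    next
      show "C2 \<subseteq> C1"
      proof
        fix x assume "x \<in> C2"
        then have "x \<one>\<^bsub>G\<^esub> \<in> ev C1" using e unfolding ev_def by (metis image_eqI)
        then obtain y where "y \<in> C1" "y \<one>\<^bsub>G\<^esub> = x \<one>\<^bsub>G\<^esub>" unfolding ev_def by auto
        then show "x \<in> C1" using evinj s1 s2 \<open>x \<in> C2\<close> by (metis subsetD)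
      qed
    qed
  qed
  have "finite ((\<lambda>v. (\<lambda>f. f v) ` H) ` V)" using per unfolding periodic_def V_def .
  then have "finite (ev ` (rcosets\<^bsub>aut_group V E\<^esub> H))" using sub finite_subset by blast
  then have "finite (rcosets\<^bsub>aut_group V E\<^esub> H)" using inj finite_imageD by blast
  then show ?thesis unfolding strongly_periodic_def V_def E_def .
qed


theorem corollary2p6:
  fixes G :: "('a, 'b) monoid_scheme" and S :: "'a set"
  assumes "group G"
    and "S \<subseteq> carrier G" and "finite S" and "\<one>\<^bsub>G\<^esub> \<notin> S"
    and "generate G S = carrier G"
    and "is_GRR G S"
  shows "(\<forall>c :: 'a \<Rightarrow> 'c.
            periodic (carrier G) (vcol_stab (carrier G) (cayley_adj G S) c) \<longrightarrow>
            strongly_periodic (carrier G) (cayley_adj G S) (vcol_stab (carrier G) (cayley_adj G S) c))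
       \<and> (\<forall>c :: 'a set \<Rightarrow> 'd.
            periodic (carrier G) (ecol_stab (carrier G) (cayley_adj G S) c) \<longrightarrow>
            strongly_periodic (carrier G) (cayley_adj G S) (ecol_stab (carrier G) (cayley_adj G S) c))
       \<and> (\<forall>Or. is_orientation (carrier G) (cayley_adj G S) Or \<longrightarrow>
            periodic (carrier G) (orient_stab (carrier G) (cayley_adj G S) Or) \<longrightarrow>
            strongly_periodic (carrier G) (cayley_adj G S) (orient_stab (carrier G) (cayley_adj G S) Or))"
proof -
  have "vcol_stab (carrier G) (cayley_adj G S) c \<subseteq> graph_aut (carrier G) (cayley_adj G S)" for c :: "'a \<Rightarrow> 'c"
    unfolding vcol_stab_def by blast
  moreover have "ecol_stab (carrier G) (cayley_adj G S) c \<subseteq> graph_aut (carrier G) (cayley_adj G S)" for c :: "'a set \<Rightarrow> 'd"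
    unfolding ecol_stab_def by blast
  moreover have "orient_stab (carrier G) (cayley_adj G S) Or \<subseteq> graph_aut (carrier G) (cayley_adj G S)" for Or
    unfolding orient_stab_def by blast
  ultimately show ?thesis using key[OF assms(1) assms(6)] by blast
qed

end
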